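(* Let $0<q<1$. Define the $q$-Bernoulli numbers $b_{n,q}$ and $q$-Bernoulli polynomials $B_{n,q}(x)$ by \[ \frac{t}{e_q(t)-1}=\sum_{n=0}^\infty b_{n,q}\frac{t^n}{[n]_q!},\qquad \frac{t}{e_q(t)-1}e_q(tx)=\sum_{n=0}^\infty B_{n,q}(x)\frac{t^n}{[n]_q!}. \] Then for every positive integer $n$, $B_{n,q}(x)$ satisfies the $q$-difference equation \[ \sum_{k=2}^{n}\frac{q^{n-k-1}b_{k,q}}{[k]_q!}D_{q,x}^{k}B_{n,q}(x)-q^n\left(x-\frac{1}{q[2]_q}\right)D_{q,x}B_{n,q}(x)+[n]_qB_{n,q}(qx)=0, \] i.e. \[ \frac{b_{n,q}}{q[n]_q!}D_{q,x}^nB_{n,q}(x)+\frac{b_{n-1,q}}{[n-1]_q!}D_{q,x}^{n-1}B_{n,q}(x)+\dots+q^{n-3}\frac{b_{2,q}}{[2]_q!}D_{q,x}^2B_{n,q}(x)-q^n\left(x-\frac{1}{q[2]_q}\right)D_{q,x}B_{n,q}(x)+[n]_qB_{n,q}(qx)=0. \]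
   Context: $[n]_q=\frac{1-q^n}{1-q}$, $[0]_q!=1$, $[n]_q!=[n]_q\cdots[1]_q$, $e_q(t)=\sum_{n\ge0}\frac{t^n}{[n]_q!}$. The $q$-derivative is $D_{q,x}f(x)=\frac{f(qx)-f(x)}{(q-1)x}$ (on polynomials $D_{q,x}x^n=[n]_qx^{n-1}$), and $D_{q,x}^k$ is its $k$-fold iterate. *)

theory Defs
  imports "HOL-Analysis.Analysis" "HOL-Computational_Algebra.Formal_Power_Series"
begin

definition qint :: "real \<Rightarrow> nat \<Rightarrow> real" where
  "qint q n = (1 - q ^ n) / (1 - q)"

definition qfact :: "real \<Rightarrow> nat \<Rightarrow> real" where
  "qfact q n = (\<Prod>i = 1..n. qint q i)"

text \<open>Formal power series of e_q(t x) in the variable t.\<close>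
definition qexp_fps :: "real \<Rightarrow> real \<Rightarrow> real fps" where
  "qexp_fps q x = Abs_fps (\<lambda>n. x ^ n / qfact q n)"

definition qbern_gf :: "real \<Rightarrow> real fps" where
  "qbern_gf q = fps_X / (qexp_fps q 1 - 1)"

definition qbern_num :: "real \<Rightarrow> nat \<Rightarrow> real" where
  "qbern_num q n = fps_nth (qbern_gf q) n * qfact q n"

definition qbern_poly :: "real \<Rightarrow> nat \<Rightarrow> real \<Rightarrow> real" where
  "qbern_poly q n x = fps_nth (qbern_gf q * qexp_fps q x) n * qfact q n"

text \<open>Jackson q-derivative; at x = 0 the standard convention D_q f(0) = f'(0).\<close>
definition qderiv :: "real \<Rightarrow> (real \<Rightarrow> real) \<Rightarrow> real \<Rightarrow> real" where
  "qderiv q f x = (if x = 0 then deriv f 0 else (f (q * x) - f x) / ((q - 1) * x))"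

end

theory Submission
  imports Defs
begin

lemma qint_ne0: "0 < q \<Longrightarrow> q < 1 \<Longrightarrow> 0 < i \<Longrightarrow> qint q i \<noteq> 0"
  unfolding qint_def using power_strict_decreasing[of 0 i q] by auto

lemma qfact_ne0: "0 < q \<Longrightarrow> q < 1 \<Longrightarrow> qfact q n \<noteq> 0"
  unfolding qfact_def using qint_ne0 by (auto simp: prod_zero_iff)

lemma qfact_Suc: "qfact q (Suc n) = qfact q n * qint q (Suc n)"
  unfolding qfact_def by (simp add: prod.nat_ivl_Suc')

lemma qfact_0[simp]: "qfact q 0 = 1" unfolding qfact_def by simp

lemma qint_1: "q \<noteq> 1 \<Longrightarrow> qint q (Suc 0) = 1" unfolding qint_def by simp

lemma qbern_poly_sum:
  "qbern_poly q n x = (\<Sum>i\<le>n. (qfact q n * fps_nth (qbern_gf q) (n-i) / qfact q i) * x^i)"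
proof -
  have "qbern_poly q n x = (\<Sum>i=0..n. fps_nth (qbern_gf q) i * (x^(n-i) / qfact q (n-i))) * qfact q n"
    unfolding qbern_poly_def fps_mult_nth qexp_fps_def by simp
  also have "(\<Sum>i=0..n. fps_nth (qbern_gf q) i * (x^(n-i) / qfact q (n-i))) =
     (\<Sum>i=0..n. fps_nth (qbern_gf q) (n-i) * (x^i / qfact q i))"
    by (subst sum.atLeastAtMost_rev) (rule sum.cong, auto)
  finally show ?thesis
    by (simp add: atLeast0AtMost sum_distrib_right sum_distrib_left mult_ac)
qed

lemma qderiv_sum:
  assumes "0 < q" "q < 1"
  shows "qderiv q (\<lambda>x. \<Sum>i\<le>Suc m. a i * x^i) = (\<lambda>x. \<Sum>i\<le>m. a (Suc i) * qint q (Suc i) * x^i)"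
proof
  fix x :: real
  show "qderiv q (\<lambda>x. \<Sum>i\<le>Suc m. a i * x^i) x = (\<Sum>i\<le>m. a (Suc i) * qint q (Suc i) * x^i)"
  proof (cases "x = 0")
    case True
    have "((\<lambda>x. \<Sum>i\<le>Suc m. a i * x^i) has_field_derivative (\<Sum>i\<le>Suc m. a i * (of_nat i * 0^(i-1)))) (at 0)"
      apply (auto intro!: derivative_eq_intros)
      by (cases m) (auto simp: mult_ac)
    then have "deriv (\<lambda>x. \<Sum>i\<le>Suc m. a i * x^i) 0 = (\<Sum>i\<le>Suc m. a i * (of_nat i * 0^(i-1)))"
      by (rule DERIV_imp_deriv)
    also have "\<dots> = (\<Sum>i\<le>Suc m. if i = 1 then a 1 else 0)"
      by (rule sum.cong) (auto simp: power_0_left)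
    also have "\<dots> = a 1" by simp
    finally show ?thesis using True assms
      by (simp add: qderiv_def qint_1 power_0_left sum.atMost_shift)
  next
    case False
    have "(\<Sum>i\<le>Suc m. a i * (q*x)^i) - (\<Sum>i\<le>Suc m. a i * x^i)
        = (q-1)*x*(\<Sum>i\<le>m. a (Suc i) * qint q (Suc i) * x^i)"
      unfolding sum_subtractf[symmetric] sum_distrib_left
      apply (subst sum.atMost_Suc_shift)
      apply simp
      apply (rule sum.cong)
      using assms by (auto simp: qint_def field_simps power_mult_distrib)
    then show ?thesis using False assms by (simp add: qderiv_def)
  qed
qed

lemma qderiv_bern:
  assumes "0 < q" "q < 1"
  shows "qderiv q (\<lambda>x. s * qbern_poly q (Suc m) x) = (\<lambda>x. s * qint q (Suc m) * qbern_poly q m x)"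
proof -
  let ?c = "fps_nth (qbern_gf q)"
  have eq: "(\<lambda>x. s * qbern_poly q (Suc m) x) =
    (\<lambda>x. \<Sum>i\<le>Suc m. (s * (qfact q (Suc m) * ?c (Suc m-i) / qfact q i)) * x^i)"
    unfolding qbern_poly_sum sum_distrib_left by (intro ext sum.cong) simp_all
  have "qderiv q (\<lambda>x. s * qbern_poly q (Suc m) x) = (\<lambda>x. \<Sum>i\<le>m. (s * (qfact q (Suc m) * ?c (Suc m - Suc i) / qfact q (Suc i))) * qint q (Suc i) * x^i)"
    unfolding eq by (rule qderiv_sum[OF assms])
  also have "\<dots> = (\<lambda>x. s * qint q (Suc m) * qbern_poly q m x)"
  proof
    fix x
    show "(\<Sum>i\<le>m. (s * (qfact q (Suc m) * ?c (Suc m - Suc i) / qfact q (Suc i))) * qint q (Suc i) * x^i)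
       = s * qint q (Suc m) * qbern_poly q m x"
      unfolding qbern_poly_sum sum_distrib_left
      apply (rule sum.cong, simp)
      using qint_ne0[OF assms, of "Suc _"] qfact_ne0[OF assms]
      by (simp add: qfact_Suc field_simps)
  qed
  finally show ?thesis .
qed

lemma qderiv_pow_bern:
  assumes "0 < q" "q < 1" "k \<le> n"
  shows "(qderiv q ^^ k) (qbern_poly q n) = (\<lambda>x. qfact q n / qfact q (n-k) * qbern_poly q (n-k) x)"
  using assms(3)
proof (induction k)
  case 0
  then show ?case using qfact_ne0[OF assms(1,2)] by simp
next
  case (Suc k)
  then have e: "n - k = Suc (n - Suc k)" by simp
  have "(qderiv q ^^ Suc k) (qbern_poly q n) = qderiv q (\<lambda>x. qfact q n / qfact q (n-k) * qbern_poly q (n-k) x)"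
    using Suc by simp
  also have "\<dots> = (\<lambda>x. qfact q n / qfact q (n-k) * qint q (n-k) * qbern_poly q (n - Suc k) x)"
    unfolding e by (rule qderiv_bern[OF assms(1,2)])
  also have "\<dots> = (\<lambda>x. qfact q n / qfact q (n - Suc k) * qbern_poly q (n - Suc k) x)"
    using qint_ne0[OF assms(1,2), of "Suc _"] qfact_ne0[OF assms(1,2)]
    by (simp add: e qfact_Suc field_simps)
  finally show ?case .
qed

definition sc :: "real \<Rightarrow> real fps \<Rightarrow> real fps" where
  "sc q A = Abs_fps (\<lambda>n. q^n * fps_nth A n)"

lemma sc_mult: "sc q (A * B) = sc q A * sc q B"
  unfolding sc_def
  apply (rule fps_ext)
  apply (simp add: fps_mult_nth sum_distrib_left)
  apply (rule sum.cong, simp)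
  by (simp add: power_add[symmetric] mult_ac)

lemma sc_exp: "sc q (qexp_fps q y) = qexp_fps q (q*y)"
  unfolding sc_def qexp_fps_def by (simp add: power_mult_distrib)

lemma exp_q_shift:
  assumes "0 < q" "q < 1"
  shows "qexp_fps q (q*y) = qexp_fps q y + fps_const ((q-1)*y) * fps_X * qexp_fps q y"
proof (rule fps_ext)
  fix n
  show "fps_nth (qexp_fps q (q*y)) n = fps_nth (qexp_fps q y + fps_const ((q-1)*y) * fps_X * qexp_fps q y) n"
  proof (cases n)
    case 0 then show ?thesis by (simp add: qexp_fps_def)
  next
    case (Suc m)
    have "q^Suc m = 1 + (q-1)*qint q (Suc m)"
      using assms by (simp add: qint_def field_simps)
    have ne: "qint q (Suc m) \<noteq> 0" "qfact q m \<noteq> 0" using qint_ne0[OF assms, of "Suc m"] qfact_ne0[OF assms] by auto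
    have "fps_nth (qexp_fps q (q*y)) n = q^Suc m*y^Suc m/(qfact q m * qint q (Suc m))"
      using Suc by (simp add: qexp_fps_def qfact_Suc power_mult_distrib)
    also have "\<dots> = (1 + (q-1)*qint q (Suc m))*y^Suc m/(qfact q m * qint q (Suc m))"
      by (subst \<open>q^Suc m = _\<close>) simp
    also have "\<dots> = y^Suc m/(qfact q m * qint q (Suc m)) + (q-1)*y*(y^m/qfact q m)"
      using ne by (simp add: field_simps)
    also have "\<dots> = fps_nth (qexp_fps q y + fps_const ((q-1)*y) * fps_X * qexp_fps q y) n"
      using Suc by (simp add: qexp_fps_def qfact_Suc mult.assoc)
    finally show ?thesis .
  qed
qed

lemma alg1:
  fixes cc fq uu vv xx qq :: "'a::idom"
  assumes "xx = cc*uu" "qq*xx = fq * vv" "vv = uu + (qq-1)*xx*(uu+1)"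
  shows "((cc-1+xx)*fq*(qq-1) + qq*(fq-cc))*(uu * vv) = 0"
proof -
  have "((cc-1+xx)*fq*(qq-1) + qq*(fq-cc))*(uu * vv) = (cc*uu - uu + xx*uu)*(qq-1)*(fq * vv) + qq*((fq * vv)*uu - (cc*uu) * vv)"
    by (simp add: algebra_simps)
  also have "\<dots> = (xx - uu + xx*uu)*(qq-1)*(qq*xx) + qq*((qq*xx)*uu - xx * vv)"
    by (simp only: assms(1)[symmetric] assms(2)[symmetric])
  also have "\<dots> = 0" unfolding assms(3) by (simp add: algebra_simps)
  finally show ?thesis .
qed
lemma alg2:
  fixes cc fq ee eqy xx qq yy kk rr :: "'a::comm_ring_1"
  assumes "kk*(1+qq) = 1" "rr*(1-qq) = qq" "(cc-1+xx)*fq*(qq-1) + qq*(fq - cc) = 0" "eqy = ee + (qq-1)*yy*xx*ee"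
  shows "(1-qq)*((cc - 1 + kk*xx)*(fq*ee) - qq*(yy - kk)*(xx*(fq*ee)) + rr*(cc*ee - fq*eqy)) = 0"
proof -
  have "(1-qq)*((cc - 1 + kk*xx)*(fq*ee) - qq*(yy - kk)*(xx*(fq*ee)) + rr*(cc*ee - fq*eqy))
     = (1-qq)*(cc-1)*fq*ee + (kk*(1+qq))*(1-qq)*xx*fq*ee - (1-qq)*qq*yy*xx*fq*ee + (rr*(1-qq))*(cc*ee - fq*ee - (qq-1)*yy*xx*fq*ee)"
    unfolding assms(4) by (simp add: algebra_simps)
  also have "\<dots> = (1-qq)*(cc-1)*fq*ee + (1-qq)*xx*fq*ee - (1-qq)*qq*yy*xx*fq*ee + qq*(cc*ee - fq*ee - (qq-1)*yy*xx*fq*ee)"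
    by (simp only: assms(1,2) mult_1)
  also have "\<dots> = -ee*((cc-1+xx)*fq*(qq-1) + qq*(fq - cc))" by (simp add: algebra_simps)
  also have "\<dots> = 0" using assms(3) by simp
  finally show ?thesis .
qed
lemma const_m1: "fps_const (a::real) - 1 = fps_const (a - 1)"
  by (metis fps_const_1_eq_1 fps_const_sub)

lemma gf_rel:
  assumes "0 < q" "q < 1"
  shows "fps_X = qbern_gf q * (qexp_fps q 1 - 1)"
proof -
  let ?u = "qexp_fps q 1 - 1"
  have u1: "fps_nth ?u 1 = 1" using assms by (simp add: qexp_fps_def qfact_def qint_1)
  then have "?u \<noteq> 0" by auto
  moreover have "subdegree ?u \<le> subdegree (fps_X :: real fps)"
    using subdegree_leI[of ?u 1] u1 by simp
  ultimately have "fps_X div ?u * ?u = fps_X" by (rule fps_times_divide_eq)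
  then show ?thesis unfolding qbern_gf_def by simp
qed

lemma gf_rel_q:
  assumes "0 < q" "q < 1"
  shows "fps_const q * fps_X = sc q (qbern_gf q) * (qexp_fps q q - 1)"
proof -
  have "sc q fps_X = fps_const q * fps_X" unfolding sc_def by (auto simp: fps_eq_iff le_Suc_eq)
  moreover have "sc q (qexp_fps q 1 - 1) = qexp_fps q q - 1"
    unfolding sc_def qexp_fps_def by (rule fps_ext) (auto simp: le_Suc_eq)
  ultimately show ?thesis using gf_rel[OF assms] sc_mult by metis
qed

lemma gf_coeffs:
  assumes "0 < q" "q < 1"
  shows "fps_nth (qbern_gf q) 0 = 1" "fps_nth (qbern_gf q) 1 = - 1 / (1+q)"
proof -
  let ?c = "fps_nth (qbern_gf q)"
  have q2: "qfact q 2 = 1 + q" using assms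
    by (simp add: qfact_def qint_def numeral_2_eq_2 field_simps)
  have q1: "qfact q 1 = 1" "qfact q (Suc 0) = 1" using assms qfact_Suc[of q 0] qint_1[of q] by simp_all
  have "fps_nth (fps_X::real fps) 1 = fps_nth (qbern_gf q * (qexp_fps q 1 - 1)) 1"
    using gf_rel[OF assms] by simp
  then show c0: "?c 0 = 1" by (simp add: fps_mult_nth qexp_fps_def q1)
  have "fps_nth (fps_X::real fps) 2 = fps_nth (qbern_gf q * (qexp_fps q 1 - 1)) 2"
    using gf_rel[OF assms] by simp
  then have "0 = ?c 0 / qfact q 2 + ?c 1" by (simp add: fps_mult_nth qexp_fps_def q1 numeral_2_eq_2)
  then show "?c 1 = - 1/(1+q)" using c0 q2 by (simp add: field_simps)
qed

lemma key1:
  assumes "0 < q" "q < 1"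
  shows "(qbern_gf q - 1 + fps_X) * sc q (qbern_gf q) * (fps_const q - 1) + fps_const q * (sc q (qbern_gf q) - qbern_gf q) = 0"
proof -
  let ?u = "qexp_fps q 1 - 1" and ?v = "qexp_fps q q - 1"
  have ev: "?v = ?u + (fps_const q - 1) * fps_X * (?u + 1)"
    using exp_q_shift[OF assms, of 1] by (simp add: const_m1 algebra_simps)
  have "((qbern_gf q - 1 + fps_X) * sc q (qbern_gf q) * (fps_const q - 1) + fps_const q * (sc q (qbern_gf q) - qbern_gf q)) * (?u * ?v) = 0"
    by (rule alg1[OF gf_rel[OF assms] gf_rel_q[OF assms] ev])
  moreover have "?u \<noteq> 0" using assms by (auto simp: fps_eq_iff qexp_fps_def qfact_def qint_1 intro!: exI[of _ 1])
  moreover have "?v \<noteq> 0" using assms by (auto simp: fps_eq_iff qexp_fps_def qfact_def qint_1 intro!: exI[of _ 1])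
  ultimately show ?thesis by simp
qed

lemma key2:
  assumes "0 < q" "q < 1"
  defines "c \<equiv> qbern_gf q" and "Fq \<equiv> sc q (qbern_gf q)"
  shows "(c - 1 + fps_const (1/(1+q)) * fps_X) * (Fq * qexp_fps q y)
      - fps_const (q * (y - 1/(1+q))) * (fps_X * (Fq * qexp_fps q y))
      + fps_const (q/(1-q)) * (c * qexp_fps q y - Fq * qexp_fps q (q*y)) = 0"
proof -
  have k: "fps_const (1/(1+q)) * (1 + fps_const q) = 1"
    using assms(1) by (simp add: field_simps)
  have r: "fps_const (q/(1-q)) * (1 - fps_const q) = fps_const q"
    using assms(2) by (simp add: field_simps flip: fps_const_1_eq_1)
  have e: "qexp_fps q (q*y) = qexp_fps q y + (fps_const q - 1) * fps_const y * fps_X * qexp_fps q y"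
    using exp_q_shift[OF assms(1,2), of y] by (simp add: const_m1)
  have m: "fps_const (q * (y - 1/(1+q))) = fps_const q * (fps_const y - fps_const (1/(1+q)))"
    by simp
  have "(1 - fps_const q) * ((c - 1 + fps_const (1/(1+q)) * fps_X) * (Fq * qexp_fps q y)
      - fps_const (q * (y - 1/(1+q))) * (fps_X * (Fq * qexp_fps q y))
      + fps_const (q/(1-q)) * (c * qexp_fps q y - Fq * qexp_fps q (q*y))) = 0"
    unfolding m by (rule alg2[OF k r key1[OF assms(1,2), folded c_def Fq_def] e])
  moreover have "(1 - fps_const q :: real fps) \<noteq> 0"
    using assms(2) by (auto simp: fps_eq_iff intro!: exI[of _ 0])
  ultimately show ?thesis by simp
qed

lemma sc_nth: "fps_nth (sc q A) m = q^m * fps_nth A m"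
  unfolding sc_def by simp

theorem theorem4:
  fixes q x :: real and n :: nat
  assumes "0 < q" and "q < 1" and "0 < n"
  shows "(\<Sum>k = 2..n. q powi (int n - int k - 1) * qbern_num q k / qfact q k
            * (qderiv q ^^ k) (qbern_poly q n) x)
         - q ^ n * (x - 1 / (q * qint q 2)) * qderiv q (qbern_poly q n) x
         + qint q n * qbern_poly q n (q * x) = 0"
proof -
  define c where "c = qbern_gf q"
  define Fq where "Fq = sc q c"
  define y where "y = q * x"
  define H where "H = Fq * qexp_fps q y"
  define g where "g = (\<lambda>z m. fps_nth (c * qexp_fps q z) m)"
  have qn: "q \<noteq> 0" "q \<noteq> 1" "1 + q \<noteq> 0" using assms by auto
  have fne: "\<And>m. qfact q m \<noteq> 0" using qfact_ne0[OF assms(1,2)] .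
  have i: "\<And>m. q^m * g x m = fps_nth H m"
    unfolding g_def H_def Fq_def y_def using sc_nth[of q "c * qexp_fps q x"]
    by (simp add: sc_mult sc_exp)
  have i2: "\<And>m. fps_nth (Fq * qexp_fps q (q*y)) m = q^m * g y m"
    unfolding g_def Fq_def using sc_nth[of q "c * qexp_fps q y"]
    by (simp add: sc_mult sc_exp)
  have c01: "fps_nth c 0 = 1" "fps_nth c 1 = - 1/(1+q)"
    using gf_coeffs[OF assms(1,2)] unfolding c_def by auto
  define d where "d = c - 1 + fps_const (1/(1+q)) * fps_X"
  have d0: "fps_nth d 0 = 0" and d1: "fps_nth d 1 = 0" and d2: "\<And>k. k \<ge> 2 \<Longrightarrow> fps_nth d k = fps_nth c k"
    unfolding d_def using c01 by auto
  have ii: "fps_nth (d * H) n = (\<Sum>k=2..n. fps_nth c k * fps_nth H (n-k))"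
  proof -
    have "fps_nth (d * H) n = (\<Sum>k=0..n. fps_nth d k * fps_nth H (n-k))" by (rule fps_mult_nth)
    also have "\<dots> = (\<Sum>k=2..n. fps_nth d k * fps_nth H (n-k))"
      using assms(3) d0 d1 by (simp add: sum.atLeast_Suc_atMost numeral_2_eq_2)
    also have "\<dots> = (\<Sum>k=2..n. fps_nth c k * fps_nth H (n-k))"
      by (rule sum.cong) (auto simp: d2)
    finally show ?thesis .
  qed
  have iii: "fps_nth (fps_X * H) n = fps_nth H (n-1)" using assms(3) by simp
  have K: "fps_nth (d * H - fps_const (q * (y - 1/(1+q))) * (fps_X * H)
      + fps_const (q/(1-q)) * (c * qexp_fps q y - Fq * qexp_fps q (q*y))) n = 0"
    using key2[OF assms(1,2), of y] unfolding d_def H_def c_def Fq_def by simp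
  then have S: "(\<Sum>k=2..n. fps_nth c k * fps_nth H (n-k)) - q * (y - 1/(1+q)) * fps_nth H (n-1)
      + q/(1-q) * (g y n - q^n * g y n) = 0"
    using ii iii i2 unfolding g_def by simp
  have pw: "\<And>k. k \<le> n \<Longrightarrow> q powi (int n - int k - 1) = q^(n-k) / q"
  proof -
    fix k assume "k \<le> n"
    then have "int n - int k - 1 = int (n-k) - 1" by simp
    moreover have "q powi (int (n-k) - 1) = q powi (int (n-k)) / q powi 1"
      by (rule power_int_diff) (use qn in auto)
    ultimately show "q powi (int n - int k - 1) = q^(n-k) / q"
      by (simp only: power_int_of_nat power_int_1_right)
  qed
  have bp: "\<And>m z. qbern_poly q m z = g z m * qfact q m"
    unfolding qbern_poly_def g_def c_def by simp
  have T1: "(\<Sum>k = 2..n. q powi (int n - int k - 1) * qbern_num q k / qfact q k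
            * (qderiv q ^^ k) (qbern_poly q n) x) = qfact q n / q * (\<Sum>k=2..n. fps_nth c k * fps_nth H (n-k))"
    unfolding sum_distrib_left
  proof (rule sum.cong)
    fix k assume k: "k \<in> {2..n}"
    then have kn: "k \<le> n" by simp
    have "q powi (int n - int k - 1) * qbern_num q k / qfact q k * (qderiv q ^^ k) (qbern_poly q n) x
      = q^(n-k) / q * fps_nth c k * (qfact q n / qfact q (n-k) * (g x (n-k) * qfact q (n-k)))"
      using fne[of k] by (simp add: pw[OF kn] qderiv_pow_bern[OF assms(1,2) kn] qbern_num_def c_def bp)
    also have "\<dots> = qfact q n / q * (fps_nth c k * (q^(n-k) * g x (n-k)))"
      using fne[of "n-k"] by (simp add: field_simps)
    finally show "q powi (int n - int k - 1) * qbern_num q k / qfact q k * (qderiv q ^^ k) (qbern_poly q n) x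
      = qfact q n / q * (fps_nth c k * fps_nth H (n-k))" by (simp add: i)
  qed simp
  have T2: "q ^ n * (x - 1 / (q * qint q 2)) * qderiv q (qbern_poly q n) x
     = qfact q n / q * (q * (y - 1/(1+q)) * fps_nth H (n-1))"
  proof -
    have q2: "qint q 2 = 1 + q" using qn by (simp add: qint_def numeral_2_eq_2 field_simps)
    have "qderiv q (qbern_poly q n) = (qderiv q ^^ 1) (qbern_poly q n)" by simp
    also have "\<dots> = (\<lambda>x. qfact q n / qfact q (n-1) * qbern_poly q (n-1) x)"
      using qderiv_pow_bern[OF assms(1,2), of 1 n] assms(3) by simp
    finally have "qderiv q (qbern_poly q n) x = qfact q n * g x (n-1)"
      using fne[of "n-1"] by (simp add: bp)
    moreover have "q^n = q * q^(n-1)" using assms(3) by (cases n) auto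
    moreover have "q + q*q \<noteq> 0" "q * (1+q) \<noteq> 0" using assms by (smt (verit) mult_pos_pos)+
    ultimately show ?thesis unfolding q2 y_def i[symmetric] using qn
      by (simp add: field_simps)
  qed
  have T3: "qint q n * qbern_poly q n (q * x) = qfact q n / q * (q/(1-q) * (g y n - q^n * g y n))"
    using qn by (simp add: bp y_def qint_def field_simps)
  show ?thesis unfolding T1 T2 T3 right_diff_distrib[symmetric] distrib_left[symmetric] S by simp
qed

end
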